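(* Let $L\ge18$ with $L\equiv 12\pmod{24}$. Then $M_S(L,3)\le (L-4)/8$.
   Context: $\mathcal{P}(L,\omega)$ is the set of $\omega$-element subsets of $\mathbb{Z}_L$. For $\mathcal{I}\in\mathcal{P}(L,\omega)$: $d(\mathcal{I})=\{a-b \bmod L: a,b\in\mathcal{I}\}$, $d^*(\mathcal{I})=d(\mathcal{I})\setminus\{0\}$. A strongly conflict-avoiding code (SCAC) of length $L$ and weight $\omega$ is a set $\mathcal{C}=\{\mathcal{I}_1,\dots,\mathcal{I}_M\}\subseteq\mathcal{P}(L,\omega)$ such that for all $j\ne k$, $\big(d^*(\mathcal{I}_j)\cup(d^*(\mathcal{I}_j)+1)\cup(d^*(\mathcal{I}_j)-1)\big)\cap d(\mathcal{I}_k)=\emptyset$ (shifts mod $L$). $M_S(L,\omega)$ denotes the maximum number of codewords in an SCAC of length $L$ and weight $\omega$. *)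

theory Defs
  imports Complex_Main
begin

text \<open>Z_L is modelled by {0..<L} with arithmetic mod L.\<close>

definition P_set :: "nat \<Rightarrow> nat \<Rightarrow> nat set set" where
  "P_set L w = {I. I \<subseteq> {0..<L} \<and> card I = w}"

definition dset :: "nat \<Rightarrow> nat set \<Rightarrow> nat set" where
  "dset L I = {(a + L - b) mod L | a b. a \<in> I \<and> b \<in> I}"

definition dstar :: "nat \<Rightarrow> nat set \<Rightarrow> nat set" where
  "dstar L I = dset L I - {0}"

definition is_SCAC :: "nat \<Rightarrow> nat \<Rightarrow> nat set set \<Rightarrow> bool" where
  "is_SCAC L w C \<longleftrightarrow> C \<subseteq> P_set L w \<and>
     (\<forall>J\<in>C. \<forall>K\<in>C. J \<noteq> K \<longrightarrow>
        (dstar L J \<union> (\<lambda>x. (x + 1) mod L) ` dstar L J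
                   \<union> (\<lambda>x. (x + L - 1) mod L) ` dstar L J) \<inter> dset L K = {})"

definition M_S :: "nat \<Rightarrow> nat \<Rightarrow> nat" where
  "M_S L w = Max (card ` {C. is_SCAC L w C})"

end

theory Submission
  imports Defs
begin

definition SS :: "nat \<Rightarrow> nat \<Rightarrow> nat \<Rightarrow> nat set" where
  "SS p q r = {p,q,r,p+q,q+r,r+p}"
definition EE :: "nat set \<Rightarrow> nat set" where "EE S = S \<union> Suc ` S"
definition Aset :: "nat \<Rightarrow> nat set" where "Aset L = {L div 3, 2*(L div 3)}"
definition Bset :: "nat \<Rightarrow> nat set" where "Bset L = {L div 4, 2*(L div 4), 3*(L div 4)}"
definition gw :: "nat \<Rightarrow> nat set \<Rightarrow> nat" where
  "gw L S = (if S = Aset L then 4 else 0) + (if S = Bset L then 2 else 0)"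

definition goodS :: "nat \<Rightarrow> nat set \<Rightarrow> bool" where
  "goodS L S \<longleftrightarrow> card (EE S) + gw L S \<ge> 8 \<and> (card (EE S) + gw L S \<ge> 9 \<or> S \<inter> Suc ` S = {}
     \<or> (L div 3 \<in> S \<and> S \<noteq> Aset L))"

lemma card_list_ge: "distinct xs \<Longrightarrow> set xs \<subseteq> A \<Longrightarrow> finite A \<Longrightarrow> length xs \<le> card A"
  by (metis card_mono distinct_card)

lemma fin_EE: "finite (EE (SS p q r))" by (simp add: EE_def SS_def)

lemma C1:
  assumes "2 \<le> p" "p < q" "q < r" "r < p+q" "p+q+r = L" "L = 24*k+12" "L mod 4 = 0" "L mod 3 = 0"
  shows "goodS L (SS p q r)"
proof -
  note EQ = assms(5) assms(7) assms(8)
  have A: "SS p q r \<noteq> Aset L"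
  proof
    assume h: "SS p q r = Aset L"
    have "p \<in> SS p q r" "q \<in> SS p q r" "r \<in> SS p q r" by (simp_all add: SS_def)
    hence "p \<in> Aset L" "q \<in> Aset L" "r \<in> Aset L" using h by simp_all
    moreover have "L div 3 = 8*k+4" using assms by simp
    ultimately show False using assms by (auto simp: Aset_def)
  qed
  have c8: "8 \<le> card (EE (SS p q r))"
  proof -
    have "length [p,q,r,p+q,p+r,q+r,r+1,q+r+1] \<le> card (EE (SS p q r))"
      apply (rule card_list_ge)
      apply (simp only: distinct.simps set_simps insert_iff empty_iff de_Morgan_disj simp_thms) apply (intro conjI; (use assms in linarith | use EQ in presburger))
      apply (auto simp: EE_def SS_def)[1]
      by (rule fin_EE)
    thus ?thesis by simp
  qed
  show ?thesis
  proof (cases "q = p+1 \<and> r = p+2")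
    case True
    moreover have "L div 3 = 8*k+4" using assms by simp
    ultimately have "L div 3 \<in> SS p q r" using assms by (simp add: SS_def)
    thus ?thesis using A c8 by (simp add: goodS_def)
  next
    case False
    have "9 \<le> card (EE (SS p q r))"
    proof (cases "q = p+1")
      case True
      with False have "r \<noteq> q+1" by simp
      have "length [p,q,r,p+q,p+r,q+r,r+1,q+r+1,q+1] \<le> card (EE (SS p q r))"
        apply (rule card_list_ge)
        apply (simp only: distinct.simps set_simps insert_iff empty_iff de_Morgan_disj simp_thms) apply (intro conjI; (use assms in linarith | use EQ \<open>r \<noteq> q+1\<close> in presburger))
        apply (auto simp: EE_def SS_def)[1]
        by (rule fin_EE)
      thus ?thesis by simp
    next
      case False
      have "length [p,q,r,p+q,p+r,q+r,r+1,q+r+1,p+1] \<le> card (EE (SS p q r))"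
        apply (rule card_list_ge)
        apply (simp only: distinct.simps set_simps insert_iff empty_iff de_Morgan_disj simp_thms) apply (intro conjI; (use assms in linarith | use EQ False in presburger))
        apply (auto simp: EE_def SS_def)[1]
        by (rule fin_EE)
      thus ?thesis by simp
    qed
    thus ?thesis by (simp add: goodS_def)
  qed
qed


lemma C1b:
  assumes "2 \<le> p" "p < q" "q < r" "p+q < r" "p+q+r = L" "L = 24*k+12" "L mod 4 = 0" "L mod 3 = 0"
  shows "goodS L (SS p q r)"
proof -
  note EQ = assms(5) assms(7) assms(8)
  have "length [p,q,p+q,r,p+r,q+r,q+1,p+q+1,q+r+1] \<le> card (EE (SS p q r))"
    apply (rule card_list_ge)
    apply (simp only: distinct.simps set_simps insert_iff empty_iff de_Morgan_disj simp_thms) apply (intro conjI; (use assms in linarith | use EQ in presburger))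
    apply (auto simp: EE_def SS_def)[1]
    by (rule fin_EE)
  thus ?thesis by (simp add: goodS_def)
qed

lemma C5:
  assumes "2 \<le> p" "p < q" "r = p+q" "p+q+r = L" "L = 24*k+12" "L mod 4 = 0" "L mod 3 = 0"
  shows "goodS L (SS p q r)"
proof -
  note EQ = assms(3) assms(4) assms(6) assms(7)
  have "length [p,q,p+q,2*p+q,p+2*q,p+1,q+1,p+q+1,2*p+q+1,p+2*q+1] \<le> card (EE (SS p q r))"
    apply (rule card_list_ge)
    apply (simp only: distinct.simps set_simps insert_iff empty_iff de_Morgan_disj simp_thms) apply (intro conjI; (use assms in linarith | use EQ in presburger))
    using assms apply (auto simp: EE_def SS_def)[1]
    by (rule fin_EE)
  thus ?thesis by (simp add: goodS_def)
qed

lemma C2a: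
  assumes "2 \<le> p" "r = 2*p" "p+p+r = L" "L = 24*k+12" "L mod 4 = 0" "L mod 3 = 0"
  shows "goodS L (SS p p r)"
proof -
  note EQ = assms(2) assms(3) assms(5) assms(6)
  have p: "p = 6*k+3" using assms by simp
  have S: "SS p p r = {p, 2*p, 3*p}" using assms by (auto simp: SS_def)
  have B: "SS p p r = Bset L" using assms p S by (simp add: Bset_def)
  have nA: "SS p p r \<noteq> Aset L"
  proof
    assume h: "SS p p r = Aset L"
    have "p \<in> SS p p r" by (simp add: SS_def)
    hence "p \<in> Aset L" using h by simp
    moreover have "L div 3 = 8*k+4" using assms by simp
    ultimately show False using p by (auto simp: Aset_def)
  qed
  have "length [p,2*p,3*p,p+1,2*p+1,3*p+1] \<le> card (EE (SS p p r))"
    apply (rule card_list_ge)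
    apply (simp only: distinct.simps set_simps insert_iff empty_iff de_Morgan_disj simp_thms) apply (intro conjI; (use assms in linarith | use EQ in presburger))
    using S apply (auto simp: EE_def)[1]
    by (rule fin_EE)
  moreover have "SS p p r \<inter> Suc ` SS p p r = {}" unfolding S by (auto; (use assms in linarith | use EQ in presburger))
  ultimately show ?thesis using B nA by (simp add: goodS_def gw_def)
qed

lemma C2b1:
  assumes "2 \<le> p" "p < r" "r < 2*p" "p+p+r = L" "L = 24*k+12" "L mod 4 = 0" "L mod 3 = 0"
  shows "goodS L (SS p p r)"
proof -
  note EQ = assms(4) assms(6) assms(7)
  have S: "SS p p r = {p, r, 2*p, p+r}" using assms by (auto simp: SS_def)
  have "length [p,r,2*p,p+r,p+1,r+1,2*p+1,p+r+1] \<le> card (EE (SS p p r))"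
    apply (rule card_list_ge)
    apply (simp only: distinct.simps set_simps insert_iff empty_iff de_Morgan_disj simp_thms) apply (intro conjI; (use assms in linarith | use EQ in presburger))
    using S apply (auto simp: EE_def)[1]
    by (rule fin_EE)
  moreover have "SS p p r \<inter> Suc ` SS p p r = {}" unfolding S by (auto; (use assms in linarith | use EQ in presburger))
  ultimately show ?thesis by (simp add: goodS_def)
qed

lemma C2b2:
  assumes "2 \<le> p" "p < r" "2*p < r" "p+p+r = L" "L = 24*k+12" "L mod 4 = 0" "L mod 3 = 0"
  shows "goodS L (SS p p r)"
proof -
  note EQ = assms(4) assms(6) assms(7)
  have S: "SS p p r = {p, r, 2*p, p+r}" using assms by (auto simp: SS_def)
  have "length [p,r,2*p,p+r,p+1,r+1,2*p+1,p+r+1] \<le> card (EE (SS p p r))"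
    apply (rule card_list_ge)
    apply (simp only: distinct.simps set_simps insert_iff empty_iff de_Morgan_disj simp_thms) apply (intro conjI; (use assms in linarith | use EQ in presburger))
    using S apply (auto simp: EE_def)[1]
    by (rule fin_EE)
  moreover have "SS p p r \<inter> Suc ` SS p p r = {}" unfolding S by (auto; (use assms in linarith | use EQ in presburger))
  ultimately show ?thesis by (simp add: goodS_def)
qed

lemma C3:
  assumes "2 \<le> p" "p < q" "p+q+q = L" "L = 24*k+12" "L mod 4 = 0" "L mod 3 = 0"
  shows "goodS L (SS p q q)"
proof -
  note EQ = assms(3) assms(5) assms(6)
  have S: "SS p q q = {p, q, p+q, 2*q}" using assms by (auto simp: SS_def)
  have "length [p,q,p+q,2*q,p+1,q+1,p+q+1,2*q+1] \<le> card (EE (SS p q q))"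
    apply (rule card_list_ge)
    apply (simp only: distinct.simps set_simps insert_iff empty_iff de_Morgan_disj simp_thms) apply (intro conjI; (use assms in linarith | use EQ in presburger))
    using S apply (auto simp: EE_def)[1]
    by (rule fin_EE)
  moreover have "SS p q q \<inter> Suc ` SS p q q = {}" unfolding S by (auto; (use assms in linarith | use EQ in presburger))
  ultimately show ?thesis by (simp add: goodS_def)
qed

lemma C4:
  assumes "2 \<le> p" "p+p+p = L" "L = 24*k+12" "L mod 4 = 0" "L mod 3 = 0"
  shows "goodS L (SS p p p)"
proof -
  note EQ = assms(2) assms(4) assms(5)
  have p: "p = 8*k+4" using assms by simp
  have S: "SS p p p = {p, 2*p}" using assms by (auto simp: SS_def)
  have A: "SS p p p = Aset L" using assms p S by (simp add: Aset_def)
  have nB: "SS p p p \<noteq> Bset L"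
  proof
    assume h: "SS p p p = Bset L"
    have "p \<in> SS p p p" by (simp add: SS_def)
    hence "p \<in> Bset L" using h by simp
    moreover have "L div 4 = 6*k+3" using assms by simp
    ultimately show False using p by (auto simp: Bset_def)
  qed
  have "length [p,2*p,p+1,2*p+1] \<le> card (EE (SS p p p))"
    apply (rule card_list_ge)
    apply (simp only: distinct.simps set_simps insert_iff empty_iff de_Morgan_disj simp_thms) apply (intro conjI; (use assms in linarith | use EQ in presburger))
    using S apply (auto simp: EE_def)[1]
    by (rule fin_EE)
  moreover have "SS p p p \<inter> Suc ` SS p p p = {}" unfolding S by (auto; (use assms in linarith | use EQ in presburger))
  ultimately show ?thesis using A nB by (simp add: goodS_def gw_def)
qed

lemma sorted_good:
  assumes "2 \<le> p" "p \<le> q" "q \<le> r" "p+q+r = L" "L = 24*k+12" "L mod 4 = 0" "L mod 3 = 0"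
  shows "goodS L (SS p q r)"
proof -
  consider "p = q" "q = r" | "p = q" "q < r" | "p < q" "q = r" | "p < q" "q < r" "r < p+q"
    | "p < q" "q < r" "p+q < r" | "p < q" "q < r" "r = p+q"
    using assms by linarith
  thus ?thesis
  proof cases
    case 1 thus ?thesis using C4[of p L k] assms by simp
  next
    case 2 thus ?thesis using C2a[of p r L k] C2b1[of p r L k] C2b2[of p r L k] assms by (cases "r = 2*p"; cases "r < 2*p") auto
  next
    case 3 thus ?thesis using C3[of p q L k] assms by simp
  next
    case 4 thus ?thesis using C1[of p q r L k] assms by simp
  next
    case 5 thus ?thesis using C1b[of p q r L k] assms by simp
  next
    case 6 thus ?thesis using C5[of p q r L k] assms by simp
  qed
qed

lemma SS_sym: "SS p q r = SS q p r" "SS p q r = SS p r q"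
  unfolding SS_def by auto

lemma all_good:
  assumes "2 \<le> p" "2 \<le> q" "2 \<le> r" "p+q+r = L" "L = 24*k+12" "L mod 4 = 0" "L mod 3 = 0"
  shows "goodS L (SS p q r)"
proof -
  consider "p \<le> q" "q \<le> r" | "p \<le> r" "r \<le> q" | "q \<le> p" "p \<le> r" | "q \<le> r" "r \<le> p"
    | "r \<le> p" "p \<le> q" | "r \<le> q" "q \<le> p" by linarith
  thus ?thesis
  proof cases
    case 1 thus ?thesis using sorted_good[of p q r L k] assms by simp
  next
    case 2 thus ?thesis using sorted_good[of p r q L k] assms SS_sym by (simp add: add.commute add.left_commute)
  next
    case 3 thus ?thesis using sorted_good[of q p r L k] assms SS_sym by (simp add: add.commute add.left_commute)
  next
    case 4 thus ?thesis using sorted_good[of q r p L k] assms SS_sym by (metis add.commute add.left_commute)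
  next
    case 5 thus ?thesis using sorted_good[of r p q L k] assms SS_sym by (metis add.commute add.left_commute)
  next
    case 6 thus ?thesis using sorted_good[of r q p L k] assms SS_sym by (metis add.commute add.left_commute)
  qed
qed


lemma dset_img: "dset L J = (\<lambda>(x,y). (x + L - y) mod L) ` (J \<times> J)"
  unfolding dset_def by auto

lemma dstar_triple:
  assumes "a < b" "b < c" "c < L"
  shows "dstar L {a,b,c} = SS (b-a) (c-b) (L+a-c)"
proof -
  have e: "{a,b,c} \<times> {a,b,c} = {(a,a),(a,b),(a,c),(b,a),(b,b),(b,c),(c,a),(c,b),(c,c)}" by auto
  have m1: "(b + L - a) mod L = b - a" using assms by (auto simp: mod_if)
  have m2: "(a + L - b) mod L = (c-b) + (L+a-c)" using assms by (auto simp: mod_if)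
  have m3: "(c + L - a) mod L = (b-a) + (c-b)" using assms by (auto simp: mod_if)
  have m4: "(a + L - c) mod L = L+a-c" using assms by (auto simp: mod_if)
  have m5: "(c + L - b) mod L = c-b" using assms by (auto simp: mod_if)
  have m6: "(b + L - c) mod L = (L+a-c) + (b-a)" using assms by (auto simp: mod_if)
  have "dset L {a,b,c} = {0, b-a, (c-b)+(L+a-c), (b-a)+(c-b), L+a-c, c-b, (L+a-c)+(b-a)}"
    unfolding dset_img e by (simp add: m1 m2 m3 m4 m5 m6 insert_commute)
  also have "\<dots> = insert 0 (SS (b-a) (c-b) (L+a-c))" unfolding SS_def by blast
  finally have "dset L {a,b,c} = insert 0 (SS (b-a) (c-b) (L+a-c))" .
  moreover have "0 \<notin> SS (b-a) (c-b) (L+a-c)" using assms by (simp add: SS_def)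
  ultimately show ?thesis by (simp add: dstar_def)
qed

lemma three_sorted:
  assumes "card J = 3"
  shows "\<exists>a b c. a < b \<and> b < c \<and> J = {a,b,c::nat}"
proof -
  obtain x y z where J: "J = {x,y,z}" "x \<noteq> y" "y \<noteq> z" "x \<noteq> z"
    using assms unfolding card_3_iff by blast
  consider "x<y" "y<z" | "x<z" "z<y" | "y<x" "x<z" | "y<z" "z<x" | "z<x" "x<y" | "z<y" "y<x"
    using J by linarith
  thus ?thesis
  proof cases
    case 1
    have "J = {x,y,z}" using J(1) by auto
    thus ?thesis using 1 by blast
  next
    case 2
    have "J = {x,z,y}" using J(1) by auto
    thus ?thesis using 2 by blast
  next
    case 3
    have "J = {y,x,z}" using J(1) by auto
    thus ?thesis using 3 by blast
  next
    case 4
    have "J = {y,z,x}" using J(1) by auto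
    thus ?thesis using 4 by blast
  next
    case 5
    have "J = {z,x,y}" using J(1) by auto
    thus ?thesis using 5 by blast
  next
    case 6
    have "J = {z,y,x}" using J(1) by auto
    thus ?thesis using 6 by blast
  qed
qed

lemma codeword_SS:
  assumes "J \<in> P_set L 3"
  shows "\<exists>p q r. 1 \<le> p \<and> 1 \<le> q \<and> 1 \<le> r \<and> p+q+r = L \<and> dstar L J = SS p q r"
proof -
  from assms have J: "J \<subseteq> {0..<L}" "card J = 3" by (auto simp: P_set_def)
  obtain a b c where abc: "a<b" "b<c" "J = {a,b,c}" using three_sorted[OF J(2)] by blast
  hence "c < L" using J by auto
  have "dstar L J = SS (b-a) (c-b) (L+a-c)" using abc \<open>c < L\<close> dstar_triple by simp
  moreover have "1 \<le> b-a" "1 \<le> c-b" "1 \<le> L+a-c" "(b-a)+(c-b)+(L+a-c) = L"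
    using abc \<open>c < L\<close> by linarith+
  ultimately show ?thesis by blast
qed


lemma dset_lt: "0 < L \<Longrightarrow> x \<in> dset L J \<Longrightarrow> x < L"
  by (auto simp: dset_def)

lemma zero_in: "J \<noteq> {} \<Longrightarrow> 0 \<in> dset L J"
  unfolding dset_def by force

lemma scac_pair:
  assumes "is_SCAC L w C" "J \<in> C" "K \<in> C" "J \<noteq> K"
  shows "(dstar L J \<union> (\<lambda>x. (x + 1) mod L) ` dstar L J
                   \<union> (\<lambda>x. (x + L - 1) mod L) ` dstar L J) \<inter> dset L K = {}"
  using assms unfolding is_SCAC_def by blast

lemma cross:
  assumes "is_SCAC L w C" "J \<in> C" "K \<in> C" "J \<noteq> K" "x \<in> dstar L J" "y \<in> dstar L K" "0 < L"
  shows "x \<noteq> y \<and> x \<noteq> Suc y"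
proof -
  have dJK: "(dstar L J \<union> (\<lambda>x. (x + 1) mod L) ` dstar L J
                   \<union> (\<lambda>x. (x + L - 1) mod L) ` dstar L J) \<inter> dset L K = {}"
    using scac_pair[OF assms(1-4)] .
  have dKJ: "(dstar L K \<union> (\<lambda>x. (x + 1) mod L) ` dstar L K
                   \<union> (\<lambda>x. (x + L - 1) mod L) ` dstar L K) \<inter> dset L J = {}"
    using scac_pair[OF assms(1,3,2)] assms(4) by blast
  have yK: "y \<in> dset L K" using assms(6) by (simp add: dstar_def)
  have xJ: "x \<in> dset L J" using assms(5) by (simp add: dstar_def)
  have "x \<noteq> y"
  proof
    assume "x = y"
    hence "x \<in> dset L K" using yK by simp
    thus False using dJK assms(5) by blast
  qed
  moreover have "x \<noteq> Suc y"
  proof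
    assume h: "x = Suc y"
    have "x < L" using dset_lt[OF assms(7) xJ] .
    hence "(y+1) mod L = x" using h by simp
    hence "x \<in> (\<lambda>x. (x+1) mod L) ` dstar L K" using image_eqI[of x "\<lambda>x. (x+1) mod L" y "dstar L K"] assms(6) by simp
    thus False using dKJ xJ by blast
  qed
  ultimately show ?thesis ..
qed

lemma one_notin:
  assumes "is_SCAC L w C" "J \<in> C" "K \<in> C" "J \<noteq> K" "K \<noteq> {}" "2 \<le> L"
  shows "1 \<notin> dstar L J" "L - 1 \<notin> dstar L J"
proof -
  have d: "(dstar L J \<union> (\<lambda>x. (x + 1) mod L) ` dstar L J
                   \<union> (\<lambda>x. (x + L - 1) mod L) ` dstar L J) \<inter> dset L K = {}"
    using scac_pair[OF assms(1-4)] .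
  have z: "0 \<in> dset L K" using zero_in[OF assms(5)] .
  show "1 \<notin> dstar L J"
  proof
    assume "1 \<in> dstar L J"
    moreover have "(1 + L - 1) mod L = 0" by simp
    ultimately have "0 \<in> (\<lambda>x. (x + L - 1) mod L) ` dstar L J" using image_eqI[of 0 "\<lambda>x. (x + L - 1) mod L" 1 "dstar L J"] by simp
    thus False using d z by blast
  qed
  show "L - 1 \<notin> dstar L J"
  proof
    assume "L - 1 \<in> dstar L J"
    moreover have "(L - 1 + 1) mod L = 0" using assms(6) by simp
    ultimately have "0 \<in> (\<lambda>x. (x + 1) mod L) ` dstar L J" using image_eqI[of 0 "\<lambda>x. (x + 1) mod L" "L - 1" "dstar L J"] by simp
    thus False using d z by blast
  qed
qed

lemma nc_bound:
  assumes "finite X" "X \<subseteq> {a..<b}" "X \<inter> Suc ` X = {}"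
  shows "2 * card X \<le> b - a + 1"
proof -
  have "X \<union> Suc ` X \<subseteq> {a..<b+1}" using assms(2) by auto
  hence "card (X \<union> Suc ` X) \<le> card {a..<b+1}" by (intro card_mono) auto
  hence "card (X \<union> Suc ` X) \<le> b + 1 - a" by simp
  moreover have "card (X \<union> Suc ` X) = 2 * card X"
    using assms(1,3) by (simp add: card_Un_disjoint card_image)
  ultimately show ?thesis by linarith
qed
lemma sum_if_const: "finite C \<Longrightarrow> (\<Sum>J\<in>C. if P J then (c::nat) else 0) = c * card {J\<in>C. P J}"
proof -
  assume "finite C"
  have "(\<Sum>J\<in>C. if P J then (c::nat) else 0) = (\<Sum>J\<in>{J\<in>C. P J}. c)"
    using \<open>finite C\<close> by (simp add: sum.If_cases Int_def)
  thus ?thesis by simp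
qed

lemma main_bound:
  assumes SC: "is_SCAC L 3 C" and Lk: "L = 24*k+12" and k1: "1 \<le> k"
  shows "8 * card C + 4 \<le> L"
proof -
  have L4: "L mod 4 = 0" and L3: "L mod 3 = 0" using Lk by presburger+
  have Lpos: "0 < L" "2 \<le> L" using Lk k1 by simp_all
  have CP: "C \<subseteq> P_set L 3" using SC by (simp add: is_SCAC_def)
  have finP: "finite (P_set L 3)"
    by (rule finite_subset[of _ "Pow {0..<L}"]) (auto simp: P_set_def)
  have finC: "finite C" using CP finP finite_subset by blast
  show ?thesis
  proof (cases "card C \<le> 1")
    case True thus ?thesis using Lk k1 by linarith
  next
    case False
    define M where "M = card C"
    have other: "\<exists>K\<in>C. K \<noteq> J" for J
    proof -
      from False obtain A B where "A \<in> C" "B \<in> C" "A \<noteq> B"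
        using finC card_le_Suc0_iff_eq[OF finC] by auto
      thus ?thesis by metis
    qed
    have ne: "K \<noteq> {}" if "K \<in> C" for K
      using that CP by (auto simp: P_set_def)
    define D where "D J = dstar L J" for J
    have Dprops: "goodS L (D J) \<and> D J \<subseteq> {2..L-2} \<and> finite (D J)" if J: "J \<in> C" for J
    proof -
      obtain K where K: "K \<in> C" "K \<noteq> J" using other by blast
      have n1: "1 \<notin> D J" "L - 1 \<notin> D J" using one_notin[OF SC J K(1) K(2)[symmetric] ne[OF K(1)] Lpos(2)]
        by (simp_all add: D_def)
      obtain p q r where pqr: "1 \<le> p" "1 \<le> q" "1 \<le> r" "p+q+r = L" "D J = SS p q r"
        using codeword_SS[of J L] CP J unfolding D_def by blast
      have "p \<noteq> 1" "q \<noteq> 1" "r \<noteq> 1" using n1 pqr(5) unfolding SS_def by auto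
      hence "2 \<le> p" "2 \<le> q" "2 \<le> r" using pqr by auto
      hence g: "goodS L (D J)" using all_good[of p q r L k] pqr Lk L4 L3 by simp
      have sub: "D J \<subseteq> {2..L-2}"
      proof
        fix x assume x: "x \<in> D J"
        hence "x < L" "x \<noteq> 0" using dset_lt[OF Lpos(1)] by (auto simp: D_def dstar_def)
        thus "x \<in> {2..L-2}" using n1 x by (cases "x = 1"; cases "x = L - 1") auto
      qed
      thus ?thesis using g finite_subset by blast
    qed
    have crossD: "x \<noteq> y \<and> x \<noteq> Suc y" if "J \<in> C" "K \<in> C" "J \<noteq> K" "x \<in> D J" "y \<in> D K" for J K x y
      using cross[OF SC that(1-3) _ _ Lpos(1)] that(4,5) by (simp add: D_def)
    define E where "E J = EE (D J)" for J
    have Esub: "E J \<subseteq> {2..<L}" if "J \<in> C" for J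
    proof -
      have b: "\<forall>x\<in>D J. 2 \<le> x \<and> x \<le> L - 2" using Dprops[OF that] by auto
      show ?thesis unfolding E_def EE_def using b Lpos by fastforce
    qed
    have Efin: "finite (E J)" if "J \<in> C" for J
      using Dprops[OF that] unfolding E_def EE_def by auto
    have Edisj: "E J \<inter> E K = {}" if "J \<in> C" "K \<in> C" "J \<noteq> K" for J K
    proof -
      have "x \<noteq> y" "x \<noteq> Suc y" "y \<noteq> Suc x" if "x \<in> D J" "y \<in> D K" for x y
        using crossD[of J K x y] crossD[of K J y x] \<open>J \<in> C\<close> \<open>K \<in> C\<close> \<open>J \<noteq> K\<close> that by auto
      thus ?thesis unfolding E_def EE_def by blast
    qed
    define F where "F = (\<Sum>J\<in>C. card (E J))"
    have cardUE: "card (\<Union>J\<in>C. E J) = F"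
      unfolding F_def by (rule card_UN_disjoint[OF finC]) (use Efin Edisj in auto)
    have FL: "F \<le> L - 2"
    proof -
      have "(\<Union>J\<in>C. E J) \<subseteq> {2..<L}" using Esub by blast
      hence "card (\<Union>J\<in>C. E J) \<le> card {2..<L}" by (intro card_mono) auto
      thus ?thesis using cardUE by simp
    qed
    define G where "G = (\<Sum>J\<in>C. gw L (D J))"
    have FG: "8 * M \<le> F + G"
    proof -
      have "(\<Sum>J\<in>C. (8::nat)) \<le> (\<Sum>J\<in>C. card (E J) + gw L (D J))"
        by (rule sum_mono) (use Dprops in \<open>auto simp: goodS_def E_def\<close>)
      thus ?thesis by (simp add: M_def F_def G_def sum.distrib)
    qed
    define CA where "CA = {J\<in>C. D J = Aset L}"
    define CB where "CB = {J\<in>C. D J = Bset L}"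
    have finCA: "finite CA" "finite CB" using finC by (simp_all add: CA_def CB_def)
    have GAB: "G = 4 * card CA + 2 * card CB"
      unfolding G_def gw_def CA_def CB_def
      by (simp add: sum.distrib sum_if_const[OF finC])
    have CA1: "card CA \<le> 1"
    proof -
      have "J = K" if "J \<in> CA" "K \<in> CA" for J K
      proof (rule ccontr)
        assume "J \<noteq> K"
        have "L div 3 \<in> D J" "L div 3 \<in> D K" using that by (auto simp: CA_def Aset_def)
        thus False using crossD[of J K] that \<open>J \<noteq> K\<close> by (auto simp: CA_def)
      qed
      thus ?thesis using card_le_Suc0_iff_eq[OF finCA(1)] by auto
    qed
    have CB1: "card CB \<le> 1"
    proof -
      have "J = K" if "J \<in> CB" "K \<in> CB" for J K
      proof (rule ccontr)
        assume "J \<noteq> K"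
        have "L div 4 \<in> D J" "L div 4 \<in> D K" using that by (auto simp: CB_def Bset_def)
        thus False using crossD[of J K] that \<open>J \<noteq> K\<close> by (auto simp: CB_def)
      qed
      thus ?thesis using card_le_Suc0_iff_eq[OF finCA(2)] by auto
    qed
    show ?thesis
    proof (cases "card CA = 1 \<and> card CB = 1")
      case False
      hence "G \<le> 4" using GAB CA1 CB1 by linarith
      hence "8 * M \<le> L + 2" using FG FL Lpos by linarith
      thus ?thesis unfolding M_def[symmetric] using Lk by presburger
    next
      case True
      then obtain JA JB where JA: "CA = {JA}" and JB: "CB = {JB}" by (meson card_1_singletonE)
      have JAC: "JA \<in> C" "D JA = Aset L" using JA by (auto simp: CA_def)
      have JBC: "JB \<in> C" "D JB = Bset L" using JB by (auto simp: CB_def)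
      have G6: "G = 6" using GAB True by simp
      show ?thesis
      proof (cases "\<exists>J0\<in>C. 9 \<le> card (E J0) + gw L (D J0)")
        case True
        then obtain J0 where J0: "J0 \<in> C" "9 \<le> card (E J0) + gw L (D J0)" by blast
        define f where "f J = card (E J) + gw L (D J)" for J
        have s1: "(\<Sum>J\<in>C. f J) = f J0 + (\<Sum>J\<in>C-{J0}. f J)"
          using sum.remove[OF finC J0(1)] by simp
        have s2: "(\<Sum>J\<in>C-{J0}. (8::nat)) \<le> (\<Sum>J\<in>C-{J0}. f J)"
          by (rule sum_mono) (use Dprops in \<open>auto simp: goodS_def E_def f_def\<close>)
        have "card (C - {J0}) = M - 1" using finC J0(1) by (simp add: M_def)
        moreover have "1 \<le> M" using False by (simp add: M_def)
        ultimately have s3: "(\<Sum>J\<in>C-{J0}. (8::nat)) + 8 = 8 * M" by simp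
        have s4: "(\<Sum>J\<in>C. f J) = F + G" by (simp add: F_def G_def f_def sum.distrib)
        have "9 \<le> f J0" using J0(2) by (simp add: f_def)
        hence "8 * M + 1 \<le> F + G" using s1 s2 s3 s4 by linarith
        hence "8 * M + 1 \<le> L + 4" using FL G6 Lpos by linarith
        thus ?thesis unfolding M_def[symmetric] using Lk by presburger
      next
        case False
        have noadj: "D J \<inter> Suc ` D J = {}" if J: "J \<in> C" for J
        proof -
          have le8: "\<not> 9 \<le> card (E J) + gw L (D J)" using False J by blast
          have "D J \<inter> Suc ` D J = {} \<or> (L div 3 \<in> D J \<and> D J \<noteq> Aset L)"
            using Dprops[OF J] le8 by (simp add: goodS_def E_def)
          moreover have "\<not> (L div 3 \<in> D J \<and> D J \<noteq> Aset L)"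
          proof
            assume h: "L div 3 \<in> D J \<and> D J \<noteq> Aset L"
            hence "J \<noteq> JA" using JAC by auto
            moreover have "L div 3 \<in> D JA" using JAC by (simp add: Aset_def)
            ultimately show False using crossD[of J JA] J JAC h by blast
          qed
          ultimately show ?thesis by blast
        qed
        show ?thesis
        proof (rule ccontr)
          assume nb: "\<not> 8 * card C + 4 \<le> L"
          have "L + 4 \<le> 8 * M" using nb Lk unfolding M_def by presburger
          hence FL2: "L - 2 \<le> F" using FG G6 by linarith
          define Dall where "Dall = (\<Union>J\<in>C. D J)"
          have finDall: "finite Dall" unfolding Dall_def using finC Dprops by blast
          have Dallsub: "Dall \<subseteq> {2..L-2}" unfolding Dall_def using Dprops by blast
          have Dnadj: "Dall \<inter> Suc ` Dall = {}"
          proof -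
            have "x \<noteq> Suc y" if "x \<in> D J" "y \<in> D K" "J \<in> C" "K \<in> C" for x y J K
            proof (cases "J = K")
              case True thus ?thesis using noadj[OF that(3)] that by blast
            next
              case False thus ?thesis using crossD[of J K x y] that by blast
            qed
            thus ?thesis unfolding Dall_def by blast
          qed
          have "(\<Union>J\<in>C. E J) = Dall \<union> Suc ` Dall" unfolding E_def EE_def Dall_def by blast
          hence "F = card Dall + card (Suc ` Dall)"
            using cardUE finDall Dnadj by (simp add: card_Un_disjoint)
          hence F2: "F = 2 * card Dall" by (simp add: card_image)
          define t where "t = L div 4"
          have t: "t = 6*k+3" unfolding t_def using Lk by simp
          have "t \<in> D JB" using JBC(2) by (simp add: Bset_def t_def)
          hence tD: "t \<in> Dall" using JBC(1) unfolding Dall_def by blast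
          have nt1: "t - 1 \<notin> Dall"
          proof
            assume h: "t - 1 \<in> Dall"
            have "Suc (t - 1) = t" using t by simp
            hence "t \<in> Suc ` Dall" using imageI[OF h, of Suc] by simp
            thus False using tD Dnadj by blast
          qed
          have nt2: "t + 1 \<notin> Dall"
          proof
            assume h: "t + 1 \<in> Dall"
            have "t + 1 \<in> Suc ` Dall" using imageI[OF tD, of Suc] by simp
            thus False using h Dnadj by blast
          qed
          define D1 where "D1 = Dall \<inter> {2..<t-1}"
          define D2 where "D2 = Dall \<inter> {t+2..<L-1}"
          have split: "Dall \<subseteq> D1 \<union> {t} \<union> D2"
          proof
            fix x assume x: "x \<in> Dall"
            hence "2 \<le> x" "x \<le> L - 2" using Dallsub by auto
            moreover have "x \<noteq> t - 1" "x \<noteq> t + 1" using x nt1 nt2 by auto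
            ultimately have "x \<in> {2..<t-1} \<or> x = t \<or> x \<in> {t+2..<L-1}" using t by auto
            thus "x \<in> D1 \<union> {t} \<union> D2" unfolding D1_def D2_def using x by blast
          qed
          have "2 * card D1 \<le> (t - 1) - 2 + 1"
            by (rule nc_bound) (use finDall Dnadj in \<open>auto simp: D1_def\<close>)
          hence c1: "card D1 \<le> 3*k" using t by simp
          have "2 * card D2 \<le> (L - 1) - (t + 2) + 1"
            by (rule nc_bound) (use finDall Dnadj in \<open>auto simp: D2_def\<close>)
          hence c2: "card D2 \<le> 9*k+3" using t Lk by simp
          have "card Dall \<le> card (D1 \<union> {t} \<union> D2)"
            using split by (intro card_mono) (auto simp: D1_def D2_def)
          also have "\<dots> \<le> card D1 + card {t} + card D2" by (meson card_Un_le add_le_mono order_trans le_refl)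
          finally have "card Dall \<le> 12 * k + 4" using c1 c2 by simp
          thus False using F2 FL2 Lk by linarith
        qed
      qed
    qed
  qed
qed

theorem mainTheorem7:
  fixes L :: nat
  assumes "L \<ge> 18" and "L mod 24 = 12"
  shows "real (M_S L 3) \<le> (real L - 4) / 8"
proof -
  define k where "k = L div 24"
  have Lk: "L = 24*k+12" using assms(2) unfolding k_def by presburger
  have k1: "1 \<le> k" using Lk assms(1) by linarith
  define S where "S = {C. is_SCAC L 3 C}"
  have finP: "finite (P_set L 3)"
    by (rule finite_subset[of _ "Pow {0..<L}"]) (auto simp: P_set_def)
  have "S \<subseteq> Pow (P_set L 3)" unfolding S_def is_SCAC_def by auto
  hence finS: "finite S" using finP by (meson finite_Pow_iff finite_subset)
  have "{} \<in> S" unfolding S_def is_SCAC_def by simp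
  hence "M_S L 3 \<in> card ` S" unfolding M_S_def S_def[symmetric]
    using finS by (intro Max_in) auto
  then obtain C where C: "is_SCAC L 3 C" "M_S L 3 = card C" unfolding S_def by auto
  have "8 * card C + 4 \<le> L" using main_bound[OF C(1) Lk k1] .
  hence "8 * real (card C) + 4 \<le> real L" by linarith
  thus ?thesis using C(2) by simp
qed

end
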